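(* Let $(U,\mathrm{dist})$ be a metric space, $\gamma>0$, $\eta>0$, $\Lambda\in\mathbb{R}_{>0}\cup\{\infty\}$, $p>1$, $\theta\ge1$. Let $f:U\to\mathbb{R}$ and let $B(\cdot)$ be a $g_E$-smooth upper bound on $\mathrm{L}_{f,\Lambda}$, where $g_E(x,x')=e^{\gamma\,\mathrm{dist}(x,x')}$. Then the mechanism $M$ which on input $x$ releases $M(x)=f(x)+\frac{B(x)}{\eta}Z$ with $Z\sim\mathrm{GenCauchy}(0,1,p,\theta)$ is $(\varepsilon,0,\Lambda)$-GP, where $\varepsilon=\max(\gamma,(p\theta-1)\gamma)+(p-1)^{\frac{p-1}{p}}\theta\eta$.
   Context: $\mathrm{L}_{f,\Lambda}(x)$ is the infimum of all $K$ such that $|f(x)-f(x')|\le K\,\mathrm{dist}(x,x')$ for all $x'\in U$ with $\mathrm{dist}(x,x')\le\Lambda$. For a function $g:U\times U\to\mathbb{R}_{>0}$, a $g$-smooth upper bound on $\mathrm{L}_{f,\Lambda}$ is $B:U\to\mathbb{R}_{\ge0}$ with (1) $B(x)\ge\mathrm{L}_{f,\Lambda}(x)$ for all $x$ and (2) $B(x)\le g(x,x')B(x')$ for all $x,x'\in U$. $\mathrm{GenCauchy}(0,1,p,\theta)$ (for $p>0$, $p\theta>1$) is the distribution on $\mathbb{R}$ with density $c_{p,\theta}(1+|y|^p)^{-\theta}$, $c_{p,\theta}=\frac{p\Gamma(\theta)}{2\Gamma(1/p)\Gamma(\theta-1/p)}$. A mechanism $M$ with outputs in $\mathbb{R}$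 is $(\varepsilon,\delta,\Lambda)$-GP if for every measurable $S\subseteq\mathbb{R}$ and all $x,x'\in U$ with $\mathrm{dist}(x,x')\le\Lambda$: $\Pr[M(x)\in S]\le e^{\varepsilon\,\mathrm{dist}(x,x')}\Pr[M(x')\in S]+\delta$. *)

theory Defs
  imports "HOL-Probability.Probability"
begin

text \<open>Local Lipschitz constant L_{f,Lambda}(x), as an extended real
  (infimum over the empty set is +infinity).  Lambda is an extended real
  (Lambda = infinity allowed).\<close>
definition local_lip :: "('a::metric_space \<Rightarrow> real) \<Rightarrow> ereal \<Rightarrow> 'a \<Rightarrow> ereal" where
  "local_lip f \<Lambda> x = Inf {ereal K | K. \<forall>x'. ereal (dist x x') \<le> \<Lambda> \<longrightarrow>
                                  \<bar>f x - f x'\<bar> \<le> K * dist x x'}"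

definition smooth_upper_bound ::
  "('a::metric_space \<Rightarrow> 'a \<Rightarrow> real) \<Rightarrow> ('a \<Rightarrow> real) \<Rightarrow> ereal \<Rightarrow> ('a \<Rightarrow> real) \<Rightarrow> bool" where
  "smooth_upper_bound g f \<Lambda> B \<longleftrightarrow>
     (\<forall>x. B x \<ge> 0) \<and>
     (\<forall>x. ereal (B x) \<ge> local_lip f \<Lambda> x) \<and>
     (\<forall>x x'. B x \<le> g x x' * B x')"

definition gc_const :: "real \<Rightarrow> real \<Rightarrow> real" where
  "gc_const p \<theta> = p * Gamma \<theta> / (2 * Gamma (1 / p) * Gamma (\<theta> - 1 / p))"

definition GenCauchy :: "real \<Rightarrow> real \<Rightarrow> real measure" where
  "GenCauchy p \<theta> = density lborel
     (\<lambda>y. ennreal (gc_const p \<theta> * (1 + \<bar>y\<bar> powr p) powr (- \<theta>)))"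

definition gc_mechanism ::
  "('a \<Rightarrow> real) \<Rightarrow> ('a \<Rightarrow> real) \<Rightarrow> real \<Rightarrow> real \<Rightarrow> real \<Rightarrow> 'a \<Rightarrow> real measure" where
  "gc_mechanism f B \<eta> p \<theta> x = distr (GenCauchy p \<theta>) borel (\<lambda>z. f x + B x / \<eta> * z)"

definition GP :: "('a::metric_space \<Rightarrow> real measure) \<Rightarrow> real \<Rightarrow> real \<Rightarrow> ereal \<Rightarrow> bool" where
  "GP M \<epsilon> \<delta> \<Lambda> \<longleftrightarrow>
     (\<forall>S \<in> sets borel. \<forall>x x'. ereal (dist x x') \<le> \<Lambda> \<longrightarrow>
        measure (M x) S \<le> exp (\<epsilon> * dist x x') * measure (M x') S + \<delta>)"

end

theory Submission
  imports Defs
begin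

lemma deriv_bound:
  fixes p z :: real assumes p: "p > 1" and z: "z > 0"
  shows "p * z powr (p-1) \<le> (p-1) powr ((p-1)/p) * (1 + z powr p)"
proof -
  have Y: "p powr (1/p) * (p * z powr p / (p-1)) powr ((p-1)/p) \<le> 1/p*p + (p-1)/p * (p * z powr p / (p-1))"
    using p z by (intro Youngs_inequality_0) (auto simp: field_simps)
  have r: "1/p*p + (p-1)/p * (p * z powr p / (p-1)) = 1 + z powr p" using p by (simp add: field_simps)
  have "(p * z powr p / (p-1)) powr ((p-1)/p) = p powr ((p-1)/p) * (z powr p) powr ((p-1)/p) / (p-1) powr ((p-1)/p)"
    using p z by (simp add: powr_mult powr_divide)
  also have "(z powr p) powr ((p-1)/p) = z powr (p-1)" using p z by (simp add: powr_powr)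
  finally have e1: "(p * z powr p / (p-1)) powr ((p-1)/p) = p powr ((p-1)/p) * z powr (p-1) / (p-1) powr ((p-1)/p)" .
  have e2: "p powr (1/p) * p powr ((p-1)/p) = p"
    using p by (simp add: powr_add[symmetric] add_divide_distrib[symmetric])
  have L: "(p-1) powr ((p-1)/p) > 0" using p by simp
  have "p * z powr (p-1) / (p-1) powr ((p-1)/p) \<le> 1 + z powr p"
    using Y r e1 e2 by (metis (no_types, lifting) mult.assoc times_divide_eq_right)
  then show ?thesis using L by (simp add: divide_le_eq mult.commute)
qed

lemma psi_lip:
  fixes p r1 r2 :: real assumes p: "p > 1" and r: "0 \<le> r1" "r1 \<le> r2"
  shows "ln (1 + r2 powr p) - ln (1 + r1 powr p) \<le> (p-1) powr ((p-1)/p) * (r2 - r1)"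
proof (cases "r1 = r2")
  case True then show ?thesis by simp
next
  case False
  hence lt: "r1 < r2" using r by simp
  have cont: "continuous_on {r1..r2} (\<lambda>r. ln (1 + r powr p))"
  proof -
    have c1: "continuous_on {r1..r2} (\<lambda>r. r powr p)"
      using r p by (intro continuous_on_powr') (auto intro: continuous_intros)
    have "continuous_on {r1..r2} (\<lambda>r. 1 + r powr p)" using c1 by (intro continuous_on_add continuous_on_const)
    moreover have "\<forall>r\<in>{r1..r2}. 1 + r powr p \<noteq> 0"
      by (metis add_pos_nonneg powr_ge_zero zero_less_one order_less_irrefl)
    ultimately show ?thesis by (intro continuous_on_ln) auto
  qed
  have der: "DERIV (\<lambda>r. ln (1 + r powr p)) z :> (p * z powr (p-1)) / (1 + z powr p)" if "z > 0" for z
  proof -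
    have pos: "0 < 1 + z powr p" by (simp add: add_pos_nonneg)
    have d1: "DERIV (\<lambda>r. 1 + r powr p) z :> 0 + p * z powr (p-1)"
      by (intro DERIV_add DERIV_const has_real_derivative_powr that)
    have "DERIV (\<lambda>r. ln (1 + r powr p)) z :> 1 / (1 + z powr p) * (0 + p * z powr (p-1))"
      by (rule DERIV_chain2[OF DERIV_ln_divide[OF pos] d1])
    then show ?thesis by simp
  qed
  obtain l z where z: "r1 < z" "z < r2" "DERIV (\<lambda>r. ln (1 + r powr p)) z :> l"
     and eq: "ln (1 + r2 powr p) - ln (1 + r1 powr p) = (r2 - r1) * l"
  proof -
    have "\<exists>l z. r1 < z \<and> z < r2 \<and> DERIV (\<lambda>r. ln (1 + r powr p)) z :> l \<and>
        ln (1 + r2 powr p) - ln (1 + r1 powr p) = (r2 - r1) * l"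
    proof (rule MVT[OF lt cont])
      fix x assume "r1 < x" "x < r2"
      then have "x > 0" using r by simp
      then show "(\<lambda>r. ln (1 + r powr p)) differentiable (at x)"
        using der real_differentiable_def by blast
    qed
    then show ?thesis using that by blast
  qed
  have zpos: "z > 0" using z r by simp
  have "l = (p * z powr (p-1)) / (1 + z powr p)" using DERIV_unique[OF z(3) der[OF zpos]] .
  also have "\<dots> \<le> (p-1) powr ((p-1)/p)"
    using deriv_bound[OF p zpos] by (simp add: divide_le_eq add_pos_nonneg)
  finally show ?thesis using eq lt by (simp add: mult_left_mono)
qed

lemma psi_mono:
  fixes p r1 r2 :: real assumes p: "p > 1" and r: "0 \<le> r1" "r1 \<le> r2"
  shows "ln (1 + r1 powr p) \<le> ln (1 + r2 powr p)"
proof -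
  have "r1 powr p \<le> r2 powr p" using r p by (intro powr_mono2) auto
  moreover have "0 < 1 + r1 powr p" by (simp add: add_pos_nonneg)
  ultimately show ?thesis by simp
qed

lemma phi_lip:
  fixes p a b :: real assumes p: "p > 1"
  shows "ln (1 + \<bar>a\<bar> powr p) - ln (1 + \<bar>b\<bar> powr p) \<le> (p-1) powr ((p-1)/p) * \<bar>a - b\<bar>"
proof -
  have L: "(p-1) powr ((p-1)/p) \<ge> 0" by simp
  show ?thesis
  proof (cases "\<bar>b\<bar> \<le> \<bar>a\<bar>")
    case True
    have "ln (1 + \<bar>a\<bar> powr p) - ln (1 + \<bar>b\<bar> powr p) \<le> (p-1) powr ((p-1)/p) * (\<bar>a\<bar> - \<bar>b\<bar>)"
      using psi_lip[OF p _ True] by simp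
    also have "\<dots> \<le> (p-1) powr ((p-1)/p) * \<bar>a - b\<bar>" using L by (intro mult_left_mono) auto
    finally show ?thesis .
  next
    case False
    have "ln (1 + \<bar>a\<bar> powr p) - ln (1 + \<bar>b\<bar> powr p) \<le> 0" using psi_mono[OF p, of "\<bar>a\<bar>" "\<bar>b\<bar>"] False by simp
    also have "\<dots> \<le> (p-1) powr ((p-1)/p) * \<bar>a - b\<bar>" using L by simp
    finally show ?thesis .
  qed
qed

lemma phi_scale:
  fixes p s w :: real assumes p: "p > 1" and s: "s > 0"
  shows "ln (1 + \<bar>s * w\<bar> powr p) - ln (1 + \<bar>w\<bar> powr p) \<le> max 0 (p * ln s)"
proof -
  have e: "\<bar>s * w\<bar> powr p = s powr p * \<bar>w\<bar> powr p" using s by (simp add: abs_mult powr_mult)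
  have X: "\<bar>w\<bar> powr p \<ge> 0" by simp
  show ?thesis
  proof (cases "s \<ge> 1")
    case True
    have sp: "s powr p \<ge> 1" using True p by (simp add: ge_one_powr_ge_zero)
    have "1 + s powr p * \<bar>w\<bar> powr p \<le> s powr p * (1 + \<bar>w\<bar> powr p)" using sp by (simp add: algebra_simps)
    hence "ln (1 + s powr p * \<bar>w\<bar> powr p) \<le> ln (s powr p * (1 + \<bar>w\<bar> powr p))"
    proof -
      have "0 < s powr p * (1 + \<bar>w\<bar> powr p)" using sp X by (intro mult_pos_pos) (auto intro: add_pos_nonneg)
      then show ?thesis using \<open>1 + s powr p * \<bar>w\<bar> powr p \<le> s powr p * (1 + \<bar>w\<bar> powr p)\<close> X
        by (subst ln_le_cancel_iff) (auto intro: add_pos_nonneg)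
    qed
    also have "\<dots> = p * ln s + ln (1 + \<bar>w\<bar> powr p)"
    proof -
      have "0 < 1 + \<bar>w\<bar> powr p" using X by linarith
      then show ?thesis using s by (simp add: ln_mult ln_powr)
    qed
    finally show ?thesis using e by simp
  next
    case False
    have sp: "s powr p \<le> 1" using powr_mono2[of p s 1] False s p by simp
    have "1 + s powr p * \<bar>w\<bar> powr p \<le> 1 + \<bar>w\<bar> powr p" using sp X by (simp add: mult_left_le_one_le)
    hence "ln (1 + s powr p * \<bar>w\<bar> powr p) \<le> ln (1 + \<bar>w\<bar> powr p)"
      using X s by (subst ln_le_cancel_iff) (auto intro: add_pos_nonneg)
    then show ?thesis using e by simp
  qed
qed

lemma hexp:
  fixes p \<theta> w :: real
  shows "(1 + \<bar>w\<bar> powr p) powr (-\<theta>) = exp (- \<theta> * ln (1 + \<bar>w\<bar> powr p))"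
proof -
  have "0 < 1 + \<bar>w\<bar> powr p" by (simp add: add_pos_nonneg)
  then show ?thesis by (simp add: powr_def)
qed

lemma pointwise:
  fixes p \<theta> \<gamma> \<eta> b b' d fx fx' y :: real
  assumes p: "p > 1" and th: "\<theta> \<ge> 1" and g: "\<gamma> > 0" and eta: "\<eta> > 0" and b: "b > 0" "b' > 0" and d: "d \<ge> 0"
    and bb1: "b \<le> exp (\<gamma> * d) * b'" and bb2: "b' \<le> exp (\<gamma> * d) * b"
    and lip: "\<bar>fx - fx'\<bar> \<le> b * d"
  shows "\<eta> / b * (1 + \<bar>\<eta> * (y - fx) / b\<bar> powr p) powr (-\<theta>)
     \<le> exp ((max \<gamma> ((p * \<theta> - 1) * \<gamma>) + (p - 1) powr ((p - 1) / p) * \<theta> * \<eta>) * d) *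
        (\<eta> / b' * (1 + \<bar>\<eta> * (y - fx') / b'\<bar> powr p) powr (-\<theta>))"
proof -
  define \<phi> where "\<phi> = (\<lambda>w::real. ln (1 + \<bar>w\<bar> powr p))"
  define L where "L = (p - 1) powr ((p - 1) / p)"
  define u where "u = \<eta> * (y - fx) / b"
  define w where "w = \<eta> * (y - fx') / b"
  define s where "s = b / b'"
  define v where "v = \<eta> * (y - fx') / b'"
  define M where "M = max \<gamma> ((p * \<theta> - 1) * \<gamma>)"
  have s: "s > 0" using b by (simp add: s_def)
  have vsw: "v = s * w" using b by (simp add: v_def s_def w_def field_simps)
  have L0: "L \<ge> 0" by (simp add: L_def)
  have lb1: "ln b \<le> \<gamma> * d + ln b'"
  proof -
    have "ln b \<le> ln (exp (\<gamma> * d) * b')" using bb1 b by (subst ln_le_cancel_iff) auto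
    also have "\<dots> = \<gamma> * d + ln b'" using b by (simp add: ln_mult)
    finally show ?thesis .
  qed
  have lb2: "ln b' \<le> \<gamma> * d + ln b"
  proof -
    have "ln b' \<le> ln (exp (\<gamma> * d) * b)" using bb2 b by (subst ln_le_cancel_iff) auto
    also have "\<dots> = \<gamma> * d + ln b" using b by (simp add: ln_mult)
    finally show ?thesis .
  qed
  have lns: "ln s = ln b - ln b'" using b by (simp add: s_def ln_div)
  have "w - u = \<eta> * (fx - fx') / b"
    unfolding w_def u_def by (simp add: diff_divide_distrib[symmetric] right_diff_distrib[symmetric])
  hence "\<bar>w - u\<bar> = \<eta> * \<bar>fx - fx'\<bar> / b"
    using b eta by (simp add: abs_mult)
  also have "\<dots> \<le> \<eta> * d"
  proof -
    have "\<eta> * \<bar>fx - fx'\<bar> \<le> \<eta> * (b * d)" using lip eta by (intro mult_left_mono) auto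
    then show ?thesis using b by (simp add: divide_le_eq mult.commute mult.left_commute)
  qed
  finally have wu: "\<bar>w - u\<bar> \<le> \<eta> * d" .
  have A: "\<phi> w - \<phi> u \<le> L * (\<eta> * d)"
  proof -
    have "\<phi> w - \<phi> u \<le> L * \<bar>w - u\<bar>" unfolding \<phi>_def L_def by (rule phi_lip[OF p])
    also have "\<dots> \<le> L * (\<eta> * d)" by (rule mult_left_mono[OF wu L0])
    finally show ?thesis .
  qed
  have B: "\<phi> v - \<phi> w \<le> max 0 (p * ln s)" unfolding \<phi>_def vsw by (rule phi_scale[OF p s])
  have Cc: "\<theta> * max 0 (p * ln s) - ln s \<le> M * d"
  proof (cases "ln s \<ge> 0")
    case True
    have "\<theta> * max 0 (p * ln s) - ln s = (p * \<theta> - 1) * ln s" using True p by (simp add: algebra_simps)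
    also have "\<dots> \<le> (p * \<theta> - 1) * (\<gamma> * d)"
    proof (rule mult_left_mono)
      show "ln s \<le> \<gamma> * d" using lns lb1 by simp
      have "p * \<theta> \<ge> 1 * 1" using p th by (intro mult_mono) auto
      then show "0 \<le> p * \<theta> - 1" by simp
    qed
    also have "\<dots> \<le> M * d" unfolding M_def using d by (simp add: mult.assoc[symmetric] mult_right_mono)
    finally show ?thesis .
  next
    case False
    have "p * ln s < 0" using False p by (simp add: mult_pos_neg)
    hence "\<theta> * max 0 (p * ln s) - ln s = - ln s" by simp
    also have "\<dots> \<le> \<gamma> * d" using lns lb2 by simp
    also have "\<dots> \<le> M * d" unfolding M_def using d by (simp add: mult_right_mono)
    finally show ?thesis .
  qed
  have key: "\<theta> * (\<phi> v - \<phi> u) + ln b' - ln b \<le> (M + L * \<theta> * \<eta>) * d"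
  proof -
    have "\<theta> * (\<phi> v - \<phi> u) = \<theta> * (\<phi> v - \<phi> w) + \<theta> * (\<phi> w - \<phi> u)" by (simp add: algebra_simps)
    also have "\<dots> \<le> \<theta> * max 0 (p * ln s) + \<theta> * (L * (\<eta> * d))"
    proof (rule add_mono)
      show "\<theta> * (\<phi> v - \<phi> w) \<le> \<theta> * max 0 (p * ln s)" using B th by (intro mult_left_mono) auto
      show "\<theta> * (\<phi> w - \<phi> u) \<le> \<theta> * (L * (\<eta> * d))" using A th by (intro mult_left_mono) auto
    qed
    finally show ?thesis using Cc lns by (simp add: algebra_simps)
  qed
  have lhs: "\<eta> / b * (1 + \<bar>\<eta> * (y - fx) / b\<bar> powr p) powr (-\<theta>) = exp (ln \<eta> - ln b - \<theta> * \<phi> u)"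
  proof -
    have "exp (ln \<eta> - ln b - \<theta> * \<phi> u) = exp (ln \<eta> - ln b) * exp (- \<theta> * \<phi> u)"
      by (simp add: exp_add[symmetric])
    also have "exp (ln \<eta> - ln b) = \<eta> / b" using eta b by (simp add: exp_diff)
    finally have "exp (ln \<eta> - ln b - \<theta> * \<phi> u) = \<eta> / b * exp (- \<theta> * \<phi> u)" .
    then show ?thesis unfolding hexp \<phi>_def u_def by (rule sym)
  qed
  have rhs: "exp ((M + L * \<theta> * \<eta>) * d) * (\<eta> / b' * (1 + \<bar>\<eta> * (y - fx') / b'\<bar> powr p) powr (-\<theta>))
      = exp ((M + L * \<theta> * \<eta>) * d + ln \<eta> - ln b' - \<theta> * \<phi> v)"
  proof -
    have "exp ((M + L * \<theta> * \<eta>) * d + ln \<eta> - ln b' - \<theta> * \<phi> v)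
        = exp ((M + L * \<theta> * \<eta>) * d) * (exp (ln \<eta> - ln b') * exp (- \<theta> * \<phi> v))"
      by (simp add: exp_add[symmetric] algebra_simps)
    also have "exp (ln \<eta> - ln b') = \<eta> / b'" using eta b by (simp add: exp_diff)
    finally have "exp ((M + L * \<theta> * \<eta>) * d + ln \<eta> - ln b' - \<theta> * \<phi> v)
        = exp ((M + L * \<theta> * \<eta>) * d) * (\<eta> / b' * exp (- \<theta> * \<phi> v))" .
    then show ?thesis unfolding hexp \<phi>_def v_def by (rule sym)
  qed
  have "exp (ln \<eta> - ln b - \<theta> * \<phi> u) \<le> exp ((M + L * \<theta> * \<eta>) * d + ln \<eta> - ln b' - \<theta> * \<phi> v)"
    using key by (simp add: algebra_simps)
  then show ?thesis using lhs rhs by (simp add: M_def L_def)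
qed

lemma lip_from_local:
  fixes f :: "'a::metric_space \<Rightarrow> real"
  assumes L: "local_lip f \<Lambda> x \<le> ereal K" and d: "ereal (dist x x') \<le> \<Lambda>"
  shows "\<bar>f x - f x'\<bar> \<le> K * dist x x'"
proof (rule ccontr)
  assume "\<not> ?thesis"
  hence gt: "\<bar>f x - f x'\<bar> > K * dist x x'" by simp
  have dpos: "dist x x' > 0"
  proof (rule ccontr)
    assume "\<not> dist x x' > 0"
    hence "x = x'" by simp
    thus False using gt by simp
  qed
  define K1 where "K1 = \<bar>f x - f x'\<bar> / dist x x'"
  have "K * dist x x' < K1 * dist x x'" using gt dpos by (simp add: K1_def)
  hence "K < K1" using dpos by simp
  hence "ereal K < ereal K1" by simp
  hence "local_lip f \<Lambda> x < ereal K1" by (rule le_less_trans[OF L])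
  then obtain e where e: "e \<in> {ereal K | K. \<forall>x'. ereal (dist x x') \<le> \<Lambda> \<longrightarrow>
                                  \<bar>f x - f x'\<bar> \<le> K * dist x x'}" "e < ereal K1"
    unfolding local_lip_def by (auto simp: Inf_less_iff)
  then obtain K' where K': "e = ereal K'" "\<forall>x'. ereal (dist x x') \<le> \<Lambda> \<longrightarrow> \<bar>f x - f x'\<bar> \<le> K' * dist x x'" by auto
  have "\<bar>f x - f x'\<bar> \<le> K' * dist x x'" using K' d by blast
  also have "\<dots> < K1 * dist x x'" using e K' dpos by simp
  also have "\<dots> = \<bar>f x - f x'\<bar>" using dpos by (simp add: K1_def)
  finally show False by simp
qed

lemma gc_const_pos:
  fixes p \<theta> :: real assumes "p > 1" "\<theta> \<ge> 1"
  shows "gc_const p \<theta> > 0"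
proof -
  have "1 / p < 1" using assms by simp
  hence "\<theta> - 1 / p > 0" using assms by linarith
  moreover have "1 / p > 0" using assms by simp
  ultimately show ?thesis using assms unfolding gc_const_def
    by (intro divide_pos_pos mult_pos_pos Gamma_real_pos) auto
qed

lemma h_bound:
  fixes p \<theta> z :: real assumes p: "p > 1" and th: "\<theta> \<ge> 1"
  shows "(1 + \<bar>z\<bar> powr p) powr (-\<theta>) \<le> indicator {-1..1} z + indicator {1..} z * z powr (-p)
            + indicator {1..} (-z) * (-z) powr (-p)"
proof -
  define X where "X = 1 + \<bar>z\<bar> powr p"
  have X1: "X \<ge> 1" by (simp add: X_def)
  have "X powr (-\<theta>) \<le> X powr (-1)" using X1 th by (intro powr_mono) auto
  also have "\<dots> = 1 / X" using X1 by (simp add: powr_minus_divide)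
  finally have h1: "X powr (-\<theta>) \<le> 1 / X" .
  have h2: "1 / X \<le> 1" using X1 by simp
  have h3: "1 / X \<le> \<bar>z\<bar> powr (-p)" if "\<bar>z\<bar> \<ge> 1"
  proof -
    have zp: "\<bar>z\<bar> powr p > 0" using that by simp
    have "X \<ge> \<bar>z\<bar> powr p" by (simp add: X_def)
    hence "1 / X \<le> 1 / \<bar>z\<bar> powr p" using zp by (intro frac_le) auto
    also have "\<dots> = \<bar>z\<bar> powr (-p)" using that by (simp add: powr_minus_divide)
    finally show ?thesis .
  qed
  have nn: "0 \<le> indicator {1..} z * z powr (-p)" "0 \<le> indicator {1..} (-z) * (-z) powr (-p)"
    "0 \<le> (indicator {-1..1} z :: real)" by auto
  show ?thesis
  proof (cases "\<bar>z\<bar> \<le> 1")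
    case True
    then have "indicator {-1..1} z = (1::real)" by (auto simp: indicator_def)
    then show ?thesis using h1 h2 nn unfolding X_def by linarith
  next
    case False
    show ?thesis
    proof (cases "z \<ge> 1")
      case True
      then have "indicator {1..} z * z powr (-p) = \<bar>z\<bar> powr (-p)" by simp
      moreover have "1 / X \<le> \<bar>z\<bar> powr (-p)" using h3 False by simp
      ultimately show ?thesis using h1 nn unfolding X_def by linarith
    next
      case F2: False
      then have "z \<le> -1" using False by linarith
      then have "indicator {1..} (-z) * (-z) powr (-p) = \<bar>z\<bar> powr (-p)" by simp
      moreover have "1 / X \<le> \<bar>z\<bar> powr (-p)" using h3 False by simp
      ultimately show ?thesis using h1 nn unfolding X_def by linarith
    qed
  qed
qed

lemma tail_finite:
  fixes p :: real assumes p: "p > 1"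
  shows "(\<integral>\<^sup>+ z. ennreal (z powr (-p)) * indicator {1..} z \<partial>lborel) < \<infinity>"
proof -
  have "((\<lambda>x. x powr (-p)) has_integral -(1 powr (-p+1)) / (-p+1)) {1..}"
    using p by (intro has_integral_powr_to_inf) auto
  then have "(\<integral>\<^sup>+ z. ennreal (z powr (-p)) * indicator {1..} z \<partial>lborel) = ennreal (-(1 powr (-p+1)) / (-p+1))"
    by (intro nn_integral_has_integral_lebesgue') auto
  then show ?thesis by simp
qed

lemma gc_finite:
  fixes p \<theta> :: real assumes p: "p > 1" and th: "\<theta> \<ge> 1"
  shows "(\<integral>\<^sup>+ z. ennreal (gc_const p \<theta> * (1 + \<bar>z\<bar> powr p) powr (-\<theta>)) \<partial>lborel) < \<infinity>"
proof -
  define c where "c = gc_const p \<theta>"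
  have c: "c > 0" using gc_const_pos[OF p th] by (simp add: c_def)
  define F where "F = (\<lambda>z::real. ennreal (z powr (-p)) * indicator {1..} z)"
  have Fm[measurable]: "F \<in> borel_measurable borel" unfolding F_def by measurable
  have I1: "(\<integral>\<^sup>+ z. indicator {-1..1::real} z \<partial>lborel) < \<infinity>" 
  proof -
    have s: "{-1..1::real} \<in> sets borel" by (rule borel_closed) simp
    have "emeasure lborel {-1..1::real} = ennreal (1 - (-1))" by (rule emeasure_lborel_Icc) simp
    then show ?thesis using s by (subst nn_integral_indicator) auto
  qed
  have I2: "(\<integral>\<^sup>+ z. F z \<partial>lborel) < \<infinity>" using tail_finite[OF p] by (simp add: F_def)
  have "(\<integral>\<^sup>+ z. F z \<partial>lborel) = ennreal \<bar>-1\<bar> * (\<integral>\<^sup>+ z. F (0 + (-1) * z) \<partial>lborel)"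
    by (rule nn_integral_real_affine) auto
  hence I3: "(\<integral>\<^sup>+ z. F (- z) \<partial>lborel) < \<infinity>" using I2 by simp
  have "(\<integral>\<^sup>+ z. ennreal (c * (1 + \<bar>z\<bar> powr p) powr (-\<theta>)) \<partial>lborel)
      \<le> (\<integral>\<^sup>+ z. ennreal c * (indicator {-1..1::real} z + F z + F (- z)) \<partial>lborel)"
  proof (rule nn_integral_mono)
    fix z :: real
    have "c * (1 + \<bar>z\<bar> powr p) powr (-\<theta>) \<le> c * (indicator {-1..1::real} z + indicator {1..} z * z powr (-p)
            + indicator {1..} (-z) * (-z) powr (-p))"
      using h_bound[OF p th, of z] c by (intro mult_left_mono) auto
    hence "ennreal (c * (1 + \<bar>z\<bar> powr p) powr (-\<theta>)) \<le> ennreal (c * (indicator {-1..1::real} z + indicator {1..} z * z powr (-p)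
            + indicator {1..} (-z) * (-z) powr (-p)))" by (rule ennreal_leI)
    also have "\<dots> = ennreal c * (indicator {-1..1::real} z + F z + F (- z))"
      using c by (simp add: F_def ennreal_mult ennreal_plus indicator_mult_ennreal[symmetric] mult.commute
          flip: ennreal_indicator)
    finally show "ennreal (c * (1 + \<bar>z\<bar> powr p) powr (-\<theta>)) \<le> ennreal c * (indicator {-1..1::real} z + F z + F (- z))" .
  qed
  also have "\<dots> = ennreal c * ((\<integral>\<^sup>+ z. indicator {-1..1::real} z \<partial>lborel) + (\<integral>\<^sup>+ z. F z \<partial>lborel) + (\<integral>\<^sup>+ z. F (- z) \<partial>lborel))"
    by (simp add: nn_integral_cmult nn_integral_add)
  also have "\<dots> < \<infinity>" using I1 I2 I3 by (simp add: ennreal_mult_less_top)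
  finally show ?thesis by (simp add: c_def)
qed

lemma mech_emeasure:
  fixes f B :: "'a \<Rightarrow> real"
  assumes b: "B x > 0" and eta: "\<eta> > 0" and S[measurable]: "S \<in> sets borel" and p: "p > 1" and th: "\<theta> \<ge> 1"
  shows "emeasure (gc_mechanism f B \<eta> p \<theta> x) S = (\<integral>\<^sup>+ y. indicator S y *
     ennreal (gc_const p \<theta> * (\<eta> / B x * (1 + \<bar>\<eta> * (y - f x) / B x\<bar> powr p) powr (-\<theta>))) \<partial>lborel)"
proof -
  define c where "c = gc_const p \<theta>"
  have c: "c > 0" using gc_const_pos[OF p th] by (simp add: c_def)
  define T where "T = (\<lambda>z::real. f x + B x / \<eta> * z)"
  have Tm[measurable]: "T \<in> borel_measurable borel" unfolding T_def by measurable
  have sG: "sets (GenCauchy p \<theta>) = sets borel" by (simp add: GenCauchy_def)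
  have TmG: "T \<in> measurable (GenCauchy p \<theta>) borel" using Tm by (simp add: measurable_cong_sets[OF sG refl])
  have spG: "space (GenCauchy p \<theta>) = UNIV" by (simp add: GenCauchy_def)
  have pre[measurable]: "T -` S \<in> sets borel" using measurable_sets[OF Tm S] by simp
  have "emeasure (gc_mechanism f B \<eta> p \<theta> x) S = emeasure (GenCauchy p \<theta>) (T -` S)"
    unfolding gc_mechanism_def T_def[symmetric] using emeasure_distr[OF TmG S] spG by simp
  also have "\<dots> = (\<integral>\<^sup>+ z. ennreal (c * (1 + \<bar>z\<bar> powr p) powr (-\<theta>)) * indicator (T -` S) z \<partial>lborel)"
  proof -
    have hm: "(\<lambda>y. ennreal (gc_const p \<theta> * (1 + \<bar>y\<bar> powr p) powr - \<theta>)) \<in> borel_measurable borel"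
      by measurable
    show ?thesis unfolding GenCauchy_def c_def by (rule emeasure_density) (simp_all add: hm pre)
  qed
  finally have L: "emeasure (gc_mechanism f B \<eta> p \<theta> x) S =
      (\<integral>\<^sup>+ z. ennreal (c * (1 + \<bar>z\<bar> powr p) powr (-\<theta>)) * indicator (T -` S) z \<partial>lborel)" .
  define G where "G = (\<lambda>y. indicator S y *
     ennreal (c * (\<eta> / B x * (1 + \<bar>\<eta> * (y - f x) / B x\<bar> powr p) powr (-\<theta>))))"
  have Gm[measurable]: "G \<in> borel_measurable borel" unfolding G_def by measurable
  have bn: "B x / \<eta> \<noteq> 0" using b eta by simp
  have "(\<integral>\<^sup>+ y. G y \<partial>lborel) = ennreal \<bar>B x / \<eta>\<bar> * (\<integral>\<^sup>+ z. G (f x + B x / \<eta> * z) \<partial>lborel)"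
    by (rule nn_integral_real_affine[OF Gm bn])
  also have "\<dots> = (\<integral>\<^sup>+ z. ennreal (B x / \<eta>) * G (f x + B x / \<eta> * z) \<partial>lborel)"
    using b eta by (simp add: nn_integral_cmult)
  also have "\<dots> = (\<integral>\<^sup>+ z. ennreal (c * (1 + \<bar>z\<bar> powr p) powr (-\<theta>)) * indicator (T -` S) z \<partial>lborel)"
  proof (rule nn_integral_cong)
    fix z :: real
    have e1: "\<eta> * (f x + B x / \<eta> * z - f x) / B x = z" using b eta by (simp add: field_simps)
    have "ennreal (B x / \<eta>) * G (f x + B x / \<eta> * z)
        = indicator S (T z) * (ennreal (B x / \<eta>) * ennreal (c * (\<eta> / B x * (1 + \<bar>z\<bar> powr p) powr (-\<theta>))))"
      unfolding G_def T_def e1 by (simp add: mult.commute mult.left_commute)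
    also have "ennreal (B x / \<eta>) * ennreal (c * (\<eta> / B x * (1 + \<bar>z\<bar> powr p) powr (-\<theta>)))
        = ennreal (B x / \<eta> * (c * (\<eta> / B x * (1 + \<bar>z\<bar> powr p) powr (-\<theta>))))"
      by (rule ennreal_mult'[symmetric]) (use b eta in simp)
    also have "B x / \<eta> * (c * (\<eta> / B x * (1 + \<bar>z\<bar> powr p) powr (-\<theta>))) = c * (1 + \<bar>z\<bar> powr p) powr (-\<theta>)"
      using b eta by (simp add: field_simps)
    finally show "ennreal (B x / \<eta>) * G (f x + B x / \<eta> * z)
        = ennreal (c * (1 + \<bar>z\<bar> powr p) powr (-\<theta>)) * indicator (T -` S) z"
      by (simp add: mult.commute indicator_def)
  qed
  finally show ?thesis using L by (simp add: G_def c_def)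
qed

lemma gc_total_finite:
  fixes p \<theta> :: real assumes p: "p > 1" and th: "\<theta> \<ge> 1"
  shows "emeasure (gc_mechanism f B \<eta> p \<theta> x) S < \<infinity>"
proof -
  define T where "T = (\<lambda>z::real. f x + B x / \<eta> * z)"
  have Tm[measurable]: "T \<in> borel_measurable borel" unfolding T_def by measurable
  have sG: "sets (GenCauchy p \<theta>) = sets borel" by (simp add: GenCauchy_def)
  have TmG: "T \<in> measurable (GenCauchy p \<theta>) borel" using Tm by (simp add: measurable_cong_sets[OF sG refl])
  have spG: "space (GenCauchy p \<theta>) = UNIV" by (simp add: GenCauchy_def)
  have hm: "(\<lambda>y. ennreal (gc_const p \<theta> * (1 + \<bar>y\<bar> powr p) powr - \<theta>)) \<in> borel_measurable borel"
    by measurable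
  have "emeasure (gc_mechanism f B \<eta> p \<theta> x) S \<le> emeasure (gc_mechanism f B \<eta> p \<theta> x) (space (gc_mechanism f B \<eta> p \<theta> x))"
    by (rule emeasure_space)
  also have "\<dots> = emeasure (GenCauchy p \<theta>) (T -` UNIV \<inter> space (GenCauchy p \<theta>))"
    unfolding gc_mechanism_def T_def[symmetric] by (simp add: emeasure_distr[OF TmG])
  also have "\<dots> = emeasure (GenCauchy p \<theta>) UNIV" using spG by simp
  also have "\<dots> = (\<integral>\<^sup>+ z. ennreal (gc_const p \<theta> * (1 + \<bar>z\<bar> powr p) powr (-\<theta>)) * indicator UNIV z \<partial>lborel)"
    unfolding GenCauchy_def by (rule emeasure_density) (simp_all add: hm)
  also have "\<dots> = (\<integral>\<^sup>+ z. ennreal (gc_const p \<theta> * (1 + \<bar>z\<bar> powr p) powr (-\<theta>)) \<partial>lborel)" by simp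
  also have "\<dots> < \<infinity>" by (rule gc_finite[OF p th])
  finally show ?thesis .
qed

theorem mainTheorem3:
  fixes f B :: "'a::metric_space \<Rightarrow> real"
    and \<gamma> \<eta> p \<theta> :: real and \<Lambda> :: ereal
  assumes "\<gamma> > 0" and "\<eta> > 0" and "\<Lambda> > 0" and "p > 1" and "\<theta> \<ge> 1"
    and "smooth_upper_bound (\<lambda>x x'. exp (\<gamma> * dist x x')) f \<Lambda> B"
  shows "GP (gc_mechanism f B \<eta> p \<theta>)
            (max \<gamma> ((p * \<theta> - 1) * \<gamma>) + (p - 1) powr ((p - 1) / p) * \<theta> * \<eta>) 0 \<Lambda>"
proof -
  note g = assms(1) and eta = assms(2) and p = assms(4) and th = assms(5)
  have B0: "\<And>x. B x \<ge> 0" and BL: "\<And>x. local_lip f \<Lambda> x \<le> ereal (B x)"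
    and Bg: "\<And>x x'. B x \<le> exp (\<gamma> * dist x x') * B x'"
    using assms(6) unfolding smooth_upper_bound_def by auto
  define E where "E = max \<gamma> ((p * \<theta> - 1) * \<gamma>) + (p - 1) powr ((p - 1) / p) * \<theta> * \<eta>"
  have E0: "E \<ge> 0"
  proof -
    have "max \<gamma> ((p * \<theta> - 1) * \<gamma>) \<ge> 0" using g by simp
    moreover have "(p - 1) powr ((p - 1) / p) * \<theta> * \<eta> \<ge> 0" using th eta by simp
    ultimately show ?thesis by (simp add: E_def)
  qed
  show ?thesis unfolding GP_def E_def[symmetric]
  proof (intro ballI allI impI)
    fix S :: "real set" and x x' :: 'a
    assume S[measurable]: "S \<in> sets borel" and d: "ereal (dist x x') \<le> \<Lambda>"
    show "measure (gc_mechanism f B \<eta> p \<theta> x) S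
          \<le> exp (E * dist x x') * measure (gc_mechanism f B \<eta> p \<theta> x') S + 0"
    proof (cases "\<exists>z. B z = 0")
      case True
      then obtain z where z: "B z = 0" by blast
      have allz: "B y = 0" for y using Bg[of y z] z B0[of y] by simp
      have "\<bar>f x - f x'\<bar> \<le> 0 * dist x x'"
        using lip_from_local[OF _ d, of f 0] BL[of x] allz[of x] by (simp add: zero_ereal_def)
      hence fe: "f x = f x'" by simp
      have eqM: "gc_mechanism f B \<eta> p \<theta> x = gc_mechanism f B \<eta> p \<theta> x'"
        unfolding gc_mechanism_def using fe allz by simp
      have e1: "exp (E * dist x x') \<ge> 1" using E0 by simp
      have m0: "measure (gc_mechanism f B \<eta> p \<theta> x') S \<ge> 0" by simp
      have "measure (gc_mechanism f B \<eta> p \<theta> x') S \<le> exp (E * dist x x') * measure (gc_mechanism f B \<eta> p \<theta> x') S"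
        using mult_right_mono[OF e1 m0] by simp
      then show ?thesis using eqM by simp
    next
      case False
      hence Bpos: "\<And>y. B y > 0" using B0 by (metis less_eq_real_def)
      define c where "c = gc_const p \<theta>"
      have c: "c > 0" using gc_const_pos[OF p th] by (simp add: c_def)
      define e where "e = exp (E * dist x x')"
      have lip: "\<bar>f x - f x'\<bar> \<le> B x * dist x x'" by (rule lip_from_local[OF BL d])
      have "emeasure (gc_mechanism f B \<eta> p \<theta> x) S = (\<integral>\<^sup>+ y. indicator S y *
         ennreal (c * (\<eta> / B x * (1 + \<bar>\<eta> * (y - f x) / B x\<bar> powr p) powr (-\<theta>))) \<partial>lborel)"
        unfolding c_def by (rule mech_emeasure[of B _ \<eta>, OF Bpos eta S p th])
      also have "\<dots> \<le> (\<integral>\<^sup>+ y. ennreal e * (indicator S y *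
         ennreal (c * (\<eta> / B x' * (1 + \<bar>\<eta> * (y - f x') / B x'\<bar> powr p) powr (-\<theta>)))) \<partial>lborel)"
      proof (rule nn_integral_mono)
        fix y :: real
        have pw: "\<eta> / B x * (1 + \<bar>\<eta> * (y - f x) / B x\<bar> powr p) powr (-\<theta>)
           \<le> e * (\<eta> / B x' * (1 + \<bar>\<eta> * (y - f x') / B x'\<bar> powr p) powr (-\<theta>))"
          unfolding e_def E_def
          by (rule pointwise[OF p th g eta Bpos[of x] Bpos[of x'] zero_le_dist Bg Bg[of x' x, unfolded dist_commute[of x' x]] lip])
        have "c * (\<eta> / B x * (1 + \<bar>\<eta> * (y - f x) / B x\<bar> powr p) powr (-\<theta>))
           \<le> c * (e * (\<eta> / B x' * (1 + \<bar>\<eta> * (y - f x') / B x'\<bar> powr p) powr (-\<theta>)))"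
          by (rule mult_left_mono[OF pw]) (use c in simp)
        also have "\<dots> = e * (c * (\<eta> / B x' * (1 + \<bar>\<eta> * (y - f x') / B x'\<bar> powr p) powr (-\<theta>)))"
          by (simp only: mult.left_commute)
        finally have "c * (\<eta> / B x * (1 + \<bar>\<eta> * (y - f x) / B x\<bar> powr p) powr (-\<theta>))
           \<le> e * (c * (\<eta> / B x' * (1 + \<bar>\<eta> * (y - f x') / B x'\<bar> powr p) powr (-\<theta>)))"
           (is "?X \<le> e * ?Y") .
        hence "ennreal ?X \<le> ennreal (e * ?Y)" by (rule ennreal_leI)
        also have "ennreal (e * ?Y) = ennreal e * ennreal ?Y" by (rule ennreal_mult') (simp add: e_def)
        finally have "ennreal ?X \<le> ennreal e * ennreal ?Y" .
        hence "ennreal (c * (\<eta> / B x * (1 + \<bar>\<eta> * (y - f x) / B x\<bar> powr p) powr (-\<theta>)))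
           \<le> ennreal e * ennreal (c * (\<eta> / B x' * (1 + \<bar>\<eta> * (y - f x') / B x'\<bar> powr p) powr (-\<theta>)))"
          by this
        then show "indicator S y * ennreal (c * (\<eta> / B x * (1 + \<bar>\<eta> * (y - f x) / B x\<bar> powr p) powr (-\<theta>)))
           \<le> ennreal e * (indicator S y * ennreal (c * (\<eta> / B x' * (1 + \<bar>\<eta> * (y - f x') / B x'\<bar> powr p) powr (-\<theta>))))"
          by (cases "y \<in> S") (simp_all add: indicator_def)
      qed
      also have "\<dots> = ennreal e * (\<integral>\<^sup>+ y. indicator S y *
         ennreal (c * (\<eta> / B x' * (1 + \<bar>\<eta> * (y - f x') / B x'\<bar> powr p) powr (-\<theta>))) \<partial>lborel)"
        by (rule nn_integral_cmult) measurable
      also have "\<dots> = ennreal e * emeasure (gc_mechanism f B \<eta> p \<theta> x') S"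
        unfolding c_def by (simp add: mech_emeasure[of B _ \<eta>, OF Bpos eta S p th])
      finally have le: "emeasure (gc_mechanism f B \<eta> p \<theta> x) S \<le> ennreal e * emeasure (gc_mechanism f B \<eta> p \<theta> x') S" .
      have fin: "ennreal e * emeasure (gc_mechanism f B \<eta> p \<theta> x') S < \<top>"
        using gc_total_finite[OF p th, of f B \<eta> x' S] by (simp add: ennreal_mult_less_top)
      have "measure (gc_mechanism f B \<eta> p \<theta> x) S \<le> enn2real (ennreal e * emeasure (gc_mechanism f B \<eta> p \<theta> x') S)"
        unfolding measure_def by (rule enn2real_mono[OF le fin])
      also have "\<dots> = e * measure (gc_mechanism f B \<eta> p \<theta> x') S"
        by (simp add: enn2real_mult measure_def e_def)
      finally show ?thesis by (simp add: e_def)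
    qed
  qed
qed

end
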